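(* Let $p$ be a prime. Every group of order $p$, $p^2$ or $p^3$ has the property that each of its non-abelian subgroups $H$ satisfies $C_G(H)\le H$. A group $G$ of order $p^4$ has this property if and only if $G$ is abelian, or $G$ has maximal class (nilpotency class $3$), or $\Phi(G)=Z(G)$.
   Context: $C_G(H)$ denotes the centralizer of $H$ in $G$, $\Phi(G)$ the Frattini subgroup and $Z(G)$ the center. *)

theory Defs
  imports "HOL-Algebra.Algebra"
begin

definition centralizer :: "('a, 'b) monoid_scheme \<Rightarrow> 'a set \<Rightarrow> 'a set" where
  "centralizer G H = {g \<in> carrier G. \<forall>h \<in> H. g \<otimes>\<^bsub>G\<^esub> h = h \<otimes>\<^bsub>G\<^esub> g}"

definition group_center :: "('a, 'b) monoid_scheme \<Rightarrow> 'a set" where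
  "group_center G = centralizer G (carrier G)"

definition maximal_subgroup :: "('a, 'b) monoid_scheme \<Rightarrow> 'a set \<Rightarrow> bool" where
  "maximal_subgroup G M \<longleftrightarrow> subgroup M G \<and> M \<noteq> carrier G \<and>
     (\<forall>K. subgroup K G \<and> M \<subseteq> K \<longrightarrow> K = M \<or> K = carrier G)"

definition frattini :: "('a, 'b) monoid_scheme \<Rightarrow> 'a set" where
  "frattini G = carrier G \<inter> \<Inter> {M. maximal_subgroup G M}"

definition commutator_subgroup :: "('a, 'b) monoid_scheme \<Rightarrow> 'a set \<Rightarrow> 'a set \<Rightarrow> 'a set" where
  "commutator_subgroup G A B = generate G
     (\<Union>a \<in> A. \<Union>b \<in> B. {a \<otimes>\<^bsub>G\<^esub> b \<otimes>\<^bsub>G\<^esub> inv\<^bsub>G\<^esub> a \<otimes>\<^bsub>G\<^esub> inv\<^bsub>G\<^esub> b})"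

text \<open>Lower central series: lcs G 0 = G = gamma_1, lcs G (Suc i) = [lcs G i, G].\<close>
primrec lower_central :: "('a, 'b) monoid_scheme \<Rightarrow> nat \<Rightarrow> 'a set" where
  "lower_central G 0 = carrier G"
| "lower_central G (Suc i) = commutator_subgroup G (lower_central G i) (carrier G)"

definition nilpotency_class :: "('a, 'b) monoid_scheme \<Rightarrow> nat \<Rightarrow> bool" where
  "nilpotency_class G c \<longleftrightarrow> lower_central G c = {\<one>\<^bsub>G\<^esub>} \<and>
     (\<forall>i < c. lower_central G i \<noteq> {\<one>\<^bsub>G\<^esub>})"

definition set_commutes :: "('a, 'b) monoid_scheme \<Rightarrow> 'a set \<Rightarrow> bool" where
  "set_commutes G H \<longleftrightarrow> (\<forall>x \<in> H. \<forall>y \<in> H. x \<otimes>\<^bsub>G\<^esub> y = y \<otimes>\<^bsub>G\<^esub> x)"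

definition CC_property :: "('a, 'b) monoid_scheme \<Rightarrow> bool" where
  "CC_property G \<longleftrightarrow> (\<forall>H. subgroup H G \<and> \<not> set_commutes G H \<longrightarrow> centralizer G H \<subseteq> H)"

end

theory Submission
  imports Defs "HOL-Computational_Algebra.Primes"
begin

lemma (in group) comm_inv:
  assumes "a \<in> carrier G" "h \<in> carrier G" "a \<otimes> h = h \<otimes> a"
  shows "inv a \<otimes> h = h \<otimes> inv a"
proof -
  have "inv a \<otimes> h = inv a \<otimes> (h \<otimes> a) \<otimes> inv a" using assms(1,2) by (simp add: m_assoc)
  also have "\<dots> = inv a \<otimes> (a \<otimes> h) \<otimes> inv a" by (simp only: assms(3))
  also have "\<dots> = h \<otimes> inv a"
  proof -
    have "inv a \<otimes> (a \<otimes> h) = h" using assms(1,2) by (simp add: m_assoc[symmetric])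
    thus ?thesis by simp
  qed
  finally show ?thesis .
qed

lemma (in group) centralizer_subgroup:
  assumes "H \<subseteq> carrier G"
  shows "subgroup (centralizer G H) G"
proof
  show "centralizer G H \<subseteq> carrier G" by (auto simp: centralizer_def)
  show "\<one> \<in> centralizer G H" using assms by (auto simp: centralizer_def)
  fix x y assume x: "x \<in> centralizer G H" and y: "y \<in> centralizer G H"
  show "x \<otimes> y \<in> centralizer G H" unfolding centralizer_def
  proof (intro CollectI conjI ballI)
    show "x \<otimes> y \<in> carrier G" using x y by (auto simp: centralizer_def)
    fix h assume h: "h \<in> H"
    hence hc: "h \<in> carrier G" using assms by auto
    have xc: "x \<in> carrier G" "y \<in> carrier G" using x y by (auto simp: centralizer_def)
    have "x \<otimes> y \<otimes> h = x \<otimes> (h \<otimes> y)" using x y h xc hc by (auto simp: centralizer_def m_assoc)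
    also have "\<dots> = (x \<otimes> h) \<otimes> y" using xc hc by (simp add: m_assoc)
    also have "\<dots> = h \<otimes> x \<otimes> y" using x h by (auto simp: centralizer_def)
    finally show "x \<otimes> y \<otimes> h = h \<otimes> (x \<otimes> y)" using xc hc by (simp add: m_assoc)
  qed
next
  fix x assume x: "x \<in> centralizer G H"
  show "inv x \<in> centralizer G H" using x assms comm_inv by (auto simp: centralizer_def)
qed

lemma (in group) center_subgroup: "subgroup (group_center G) G"
  unfolding group_center_def by (rule centralizer_subgroup) simp

lemma (in group) center_normal: "group_center G \<lhd> G"
  unfolding normal_inv_iff
proof (intro conjI ballI)
  show "subgroup (group_center G) G" by (rule center_subgroup)
  fix x h assume x: "x \<in> carrier G" and h: "h \<in> group_center G"
  have hc: "h \<in> carrier G" and "x \<otimes> h = h \<otimes> x" using h x by (auto simp: group_center_def centralizer_def)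
  hence "x \<otimes> h \<otimes> inv x = h" using x by (simp add: m_assoc)
  thus "x \<otimes> h \<otimes> inv x \<in> group_center G" using h by simp
qed

lemma (in group) center_iff: "z \<in> group_center G \<longleftrightarrow> z \<in> carrier G \<and> (\<forall>g\<in>carrier G. z \<otimes> g = g \<otimes> z)"
  by (auto simp: group_center_def centralizer_def)

lemma (in group) comm_cmt_one:
  assumes "a \<in> carrier G" "b \<in> carrier G" "a \<otimes> b = b \<otimes> a"
  shows "a \<otimes> b \<otimes> inv a \<otimes> inv b = \<one>"
proof -
  have "a \<otimes> b \<otimes> inv a \<otimes> inv b = b \<otimes> a \<otimes> inv a \<otimes> inv b" using assms(3) by simp
  also have "\<dots> = \<one>" using assms(1,2) by (simp add: m_assoc)
  finally show ?thesis .
qed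

lemma (in group) cmt_one_comm:
  assumes "a \<in> carrier G" "b \<in> carrier G" "a \<otimes> b \<otimes> inv a \<otimes> inv b = \<one>"
  shows "a \<otimes> b = b \<otimes> a"
proof -
  have "a \<otimes> b = (a \<otimes> b \<otimes> inv a \<otimes> inv b) \<otimes> b \<otimes> a" using assms(1,2) by (simp add: m_assoc)
  also have "\<dots> = b \<otimes> a" using assms(1,2) by (simp only: assms(3)) simp
  finally show ?thesis .
qed

lemma (in group) quot_cmt:
  assumes N: "N \<lhd> G" and x: "x \<in> carrier G" and y: "y \<in> carrier G"
  shows "N #> (x \<otimes> y \<otimes> inv x \<otimes> inv y) =
    (N #> x) \<otimes>\<^bsub>G Mod N\<^esub> (N #> y) \<otimes>\<^bsub>G Mod N\<^esub> inv\<^bsub>G Mod N\<^esub> (N #> x) \<otimes>\<^bsub>G Mod N\<^esub> inv\<^bsub>G Mod N\<^esub> (N #> y)"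
proof -
  interpret normal N G by (rule N)
  interpret Q: group "G Mod N" by (rule factorgroup_is_group)
  interpret h: group_hom G "G Mod N" "\<lambda>a. N #> a"
    unfolding group_hom_def group_hom_axioms_def using r_coset_hom_Mod is_group Q.is_group by blast
  show ?thesis using x y by (simp add: h.hom_mult h.hom_inv)
qed

lemma (in group) quot_ker:
  assumes N: "N \<lhd> G" and c: "c \<in> carrier G" and b: "b \<in> carrier G"
    and comm: "(N #> c) \<otimes>\<^bsub>G Mod N\<^esub> (N #> b) = (N #> b) \<otimes>\<^bsub>G Mod N\<^esub> (N #> c)"
  shows "c \<otimes> b \<otimes> inv c \<otimes> inv b \<in> N"
proof -
  interpret normal N G by (rule N)
  interpret Q: group "G Mod N" by (rule factorgroup_is_group)
  have cQ: "N #> c \<in> carrier (G Mod N)" and bQ: "N #> b \<in> carrier (G Mod N)"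
    using c b by (auto simp: carrier_FactGroup)
  have "N #> (c \<otimes> b \<otimes> inv c \<otimes> inv b) = \<one>\<^bsub>G Mod N\<^esub>"
    using quot_cmt[OF N c b] Q.comm_cmt_one[OF cQ bQ comm] by simp
  hence e: "N #> (c \<otimes> b \<otimes> inv c \<otimes> inv b) = N" by simp
  have "c \<otimes> b \<otimes> inv c \<otimes> inv b \<in> N #> (c \<otimes> b \<otimes> inv c \<otimes> inv b)"
    using c b by (intro rcos_self) (auto simp: subgroup_axioms)
  thus ?thesis using e by simp
qed

locale pgrp = group G for G (structure) +
  fixes p :: nat and n :: nat
  assumes prime: "Factorial_Ring.prime p" and ord: "order G = p ^ n"
begin

lemma p_gt1: "p > 1" using prime prime_gt_1_nat by blast

lemma fin: "finite (carrier G)"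
proof -
  have "order G > 0" using ord p_gt1 by simp
  thus ?thesis unfolding order_def by (meson card_gt_0_iff)
qed

lemma card_carrier: "card (carrier G) = p ^ n" using ord by (simp add: order_def)

lemma sub_card: assumes "subgroup H G" shows "\<exists>k\<le>n. card H = p ^ k"
proof -
  have "card (rcosets H) * card H = p ^ n" using lagrange[OF assms] ord by simp
  hence "card H dvd p ^ n" by (metis dvd_triv_right)
  thus ?thesis using divides_primepow_nat[OF prime] by auto
qed

lemma pow_step: assumes "p ^ i < p ^ j" shows "p * p ^ i \<le> p ^ j"
proof -
  have "i < j" using assms p_gt1 power_strict_increasing_iff by blast
  hence "p ^ Suc i \<le> p ^ j" by (intro power_increasing) (use p_gt1 in auto)
  thus ?thesis by simp
qed

lemma sub_step:
  assumes "subgroup A G" "subgroup B G" "A \<subseteq> B" "A \<noteq> B"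
  shows "p * card A \<le> card B"
proof -
  obtain i where i: "card A = p ^ i" using sub_card[OF assms(1)] by auto
  obtain j where j: "card B = p ^ j" using sub_card[OF assms(2)] by auto
  have fB: "finite B" using fin assms(2) subgroup.subset finite_subset by blast
  have "card A < card B" using assms(3,4) fB by (simp add: psubset_card_mono)
  thus ?thesis using pow_step i j by simp
qed


lemma fin_sub: "subgroup H G \<Longrightarrow> finite H"
  using fin subgroup.subset finite_subset by metis

lemma finZ: "finite (group_center G)" using fin_sub center_subgroup by blast

lemma center_big: assumes "n \<ge> 1" shows "p \<le> card (group_center G)"
proof -
  define \<phi> where "\<phi> = (\<lambda>g. (\<lambda>h \<in> carrier G. g \<otimes> h \<otimes> (inv g)))"
  interpret A: group_action G "carrier G" \<phi> unfolding \<phi>_def by (rule action_by_conjugation)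
  let ?O = "orbits G (carrier G) \<phi>"
  have orb: "orbit G \<phi> x = {g \<otimes> x \<otimes> inv g | g. g \<in> carrier G}" if "x \<in> carrier G" for x
    using that unfolding orbit_def \<phi>_def by auto
  have finO: "finite ?O" unfolding orbits_def using fin by simp
  have sumO: "(\<Sum>ob\<in>?O. card ob) = p ^ n"
  proof -
    have "(\<Sum>ob\<in>?O. \<Sum>x\<in>ob. (1::nat)) = (\<Sum>x\<in>carrier G. 1)" using A.disjoint_sum[OF fin] .
    thus ?thesis using card_carrier by simp
  qed
  have pw: "\<exists>i\<le>n. card ob = p ^ i" if "ob \<in> ?O" for ob
  proof -
    have "\<exists>x. ob = orbit G \<phi> x \<and> x \<in> carrier G" using that by (simp add: orbits_def)
    then obtain x where x: "x \<in> carrier G" "ob = orbit G \<phi> x" by blast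
    have "card ob * card (stabilizer G \<phi> x) = p ^ n" using A.orbit_stabilizer_theorem[OF x(1)] x ord by simp
    hence "card ob dvd p ^ n" by (metis dvd_triv_left)
    thus ?thesis using divides_primepow_nat[OF prime] by auto
  qed
  define O1 where "O1 = {ob \<in> ?O. card ob = 1}"
  have finO1: "finite O1" using finO unfolding O1_def by simp
  have "(\<Sum>ob\<in>?O. card ob) = (\<Sum>ob\<in>O1. card ob) + (\<Sum>ob\<in>?O - O1. card ob)"
    using finO by (metis (no_types, lifting) O1_def mem_Collect_eq subsetI sum.subset_diff add.commute)
  moreover have "(\<Sum>ob\<in>O1. card ob) = card O1" unfolding O1_def by simp
  moreover have "p dvd (\<Sum>ob\<in>?O - O1. card ob)"
  proof (rule dvd_sum)
    fix ob assume ob: "ob \<in> ?O - O1"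
    then obtain i where "card ob = p ^ i" using pw by blast
    moreover have "card ob \<noteq> 1" using ob by (auto simp: O1_def)
    ultimately have "i \<noteq> 0" by auto
    thus "p dvd card ob" using \<open>card ob = p ^ i\<close> by (simp add: dvd_power)
  qed
  moreover have "p dvd p ^ n" using assms by (simp add: dvd_power)
  ultimately have "card O1 + (\<Sum>ob\<in>?O - O1. card ob) = p ^ n" "p dvd (\<Sum>ob\<in>?O - O1. card ob)" "p dvd p ^ n"
    using sumO by auto
  hence pO1: "p dvd card O1" by (metis dvd_add_left_iff)
  have "{\<one>} \<in> O1"
  proof -
    have "{g \<otimes> \<one> \<otimes> inv g | g. g \<in> carrier G} = {\<one>}" by force
    hence e: "orbit G \<phi> \<one> = {\<one>}" using orb[of \<one>] by simp
    have "orbit G \<phi> \<one> \<in> ?O" unfolding orbits_def by blast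
    hence "{\<one>} \<in> ?O" using e by simp
    thus ?thesis unfolding O1_def by simp
  qed
  hence "card O1 \<noteq> 0" using finO1 by auto
  hence "card O1 > 0" by simp
  hence le1: "p \<le> card O1" using pO1 by (simp add: dvd_imp_le)
  have "O1 \<subseteq> (\<lambda>z. {z}) ` group_center G"
  proof
    fix ob assume ob: "ob \<in> O1"
    hence "ob \<in> ?O" by (simp add: O1_def)
    hence "\<exists>x. ob = orbit G \<phi> x \<and> x \<in> carrier G" by (simp add: orbits_def)
    then obtain x where x: "x \<in> carrier G" "ob = orbit G \<phi> x" by blast
    have xo: "x \<in> ob" using x A.orbit_refl by simp
    have "card ob = 1" using ob by (auto simp: O1_def)
    then obtain y where "ob = {y}" by (rule card_1_singletonE)
    hence o1: "ob = {x}" using xo by simp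
    have "x \<in> group_center G" unfolding center_iff
    proof (intro conjI ballI)
      show "x \<in> carrier G" by fact
      fix g assume g: "g \<in> carrier G"
      have "\<phi> g x \<in> orbit G \<phi> x" unfolding orbit_def using g by blast
      hence "g \<otimes> x \<otimes> inv g \<in> ob" using x by (simp add: \<phi>_def)
      hence e: "g \<otimes> x \<otimes> inv g = x" using o1 by auto
      have "g \<otimes> x = g \<otimes> x \<otimes> inv g \<otimes> g" using g x by (simp add: m_assoc)
      also have "\<dots> = x \<otimes> g" using e by simp
      finally show "x \<otimes> g = g \<otimes> x" by simp
    qed
    thus "ob \<in> (\<lambda>z. {z}) ` group_center G" using o1 by auto
  qed
  hence "card O1 \<le> card ((\<lambda>z. {z}) ` group_center G)"
    by (rule card_mono[rotated]) (simp add: finZ)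
  also have "\<dots> \<le> card (group_center G)" by (rule card_image_le) (simp add: finZ)
  finally show ?thesis using le1 by simp
qed


lemma nonab_bound:
  assumes "\<not> set_commutes G (carrier G)"
  shows "p * p * card (group_center G) \<le> p ^ n"
proof -
  obtain x y where x: "x \<in> carrier G" and y: "y \<in> carrier G" and ne: "x \<otimes> y \<noteq> y \<otimes> x"
    using assms unfolding set_commutes_def by blast
  let ?C = "centralizer G {x}"
  have sC: "subgroup ?C G" using x by (intro centralizer_subgroup) auto
  have ZC: "group_center G \<subseteq> ?C" using x by (auto simp: center_iff centralizer_def)
  have xC: "x \<in> ?C" using x by (auto simp: centralizer_def)
  have xZ: "x \<notin> group_center G" using x y ne by (auto simp: center_iff)
  have yC: "y \<notin> ?C" using ne by (auto simp: centralizer_def)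
  have "?C \<noteq> carrier G" using yC y by blast
  hence "p * card ?C \<le> card (carrier G)" using sub_step[OF sC subgroup_self] sC subgroup.subset by blast
  moreover have "p * card (group_center G) \<le> card ?C" using sub_step[OF center_subgroup sC ZC] xC xZ by blast
  ultimately show ?thesis using card_carrier by (metis mult.assoc mult_le_mono2 order_trans)
qed

lemma small_comm: assumes "n \<le> 2" shows "set_commutes G (carrier G)"
proof (rule ccontr)
  assume nc: "\<not> set_commutes G (carrier G)"
  show False
  proof (cases "n = 0")
    case True
    hence "card (carrier G) = 1" using card_carrier by simp
    then obtain a where "carrier G = {a}" by (rule card_1_singletonE)
    hence "set_commutes G (carrier G)" unfolding set_commutes_def by auto
    thus False using nc by simp
  next
    case False
    hence "p \<le> card (group_center G)" using center_big by simp
    moreover have "p * p * card (group_center G) \<le> p ^ n" using nonab_bound nc by simp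
    moreover have "p ^ n \<le> p * p"
    proof -
      have "p ^ n \<le> p ^ 2" by (rule power_increasing) (use assms p_gt1 in auto)
      thus ?thesis by (simp add: power2_eq_square)
    qed
    ultimately have "p * p * p \<le> p * p" by (meson le_trans mult_le_mono2)
    moreover have "p * p * 2 \<le> p * p * p" using p_gt1 by (intro mult_le_mono2) simp
    moreover have "p * p > 0" using p_gt1 by simp
    ultimately show False by linarith
  qed
qed

lemma p3_center: assumes "n = 3" "\<not> set_commutes G (carrier G)" shows "card (group_center G) = p"
proof -
  obtain k where k: "card (group_center G) = p ^ k" using sub_card[OF center_subgroup] by auto
  have a: "p \<le> p ^ k" using center_big assms k by simp
  have "p * p * p ^ k \<le> p * p * p" using nonab_bound assms k by (simp add: power3_eq_cube)
  hence b: "p ^ k \<le> p" using p_gt1 by simp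
  show ?thesis using a b k by simp
qed

lemma p3_central:
  assumes "n = 3" "x \<in> carrier G" "y \<in> carrier G" "b \<in> carrier G"
  shows "(x \<otimes> y \<otimes> inv x \<otimes> inv y) \<otimes> b = b \<otimes> (x \<otimes> y \<otimes> inv x \<otimes> inv y)"
proof (cases "set_commutes G (carrier G)")
  case True
  thus ?thesis using assms unfolding set_commutes_def by (meson inv_closed m_closed)
next
  case False
  let ?Z = "group_center G"
  have cZ: "card ?Z = p" using p3_center assms False by simp
  have "card (rcosets ?Z) * p = p ^ 3" using lagrange[OF center_subgroup] cZ ord assms by simp
  hence "card (rcosets ?Z) = p ^ 2" using p_gt1 by (simp add: power_Suc2 numeral_3_eq_3 power2_eq_square)
  hence oQ: "order (G Mod ?Z) = p ^ 2" by (simp add: order_def FactGroup_def)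
  interpret Q: pgrp "G Mod ?Z" p 2
    using normal.factorgroup_is_group[OF center_normal] oQ prime by (simp add: pgrp_def pgrp_axioms_def)
  have "set_commutes (G Mod ?Z) (carrier (G Mod ?Z))" by (rule Q.small_comm) simp
  hence "(?Z #> x) \<otimes>\<^bsub>G Mod ?Z\<^esub> (?Z #> y) = (?Z #> y) \<otimes>\<^bsub>G Mod ?Z\<^esub> (?Z #> x)"
    unfolding set_commutes_def using assms by (auto simp: carrier_FactGroup)
  hence "x \<otimes> y \<otimes> inv x \<otimes> inv y \<in> ?Z" using quot_ker[OF center_normal] assms by simp
  thus ?thesis using assms by (simp add: center_iff)
qed


lemma sub_pgrp: assumes "subgroup H G" "card H = p ^ k" shows "pgrp (G\<lparr>carrier := H\<rparr>) p k"
  using subgroup_imp_group[OF assms(1)] assms(2) prime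
  by (simp add: pgrp_def pgrp_axioms_def order_def)

lemma sub_small: assumes "subgroup H G" "\<not> set_commutes G H" shows "p ^ 3 \<le> card H"
proof -
  obtain k where k: "k \<le> n" "card H = p ^ k" using sub_card[OF assms(1)] by auto
  interpret H: pgrp "G\<lparr>carrier := H\<rparr>" p k by (rule sub_pgrp[OF assms(1) k(2)])
  have "\<not> k \<le> 2"
  proof
    assume "k \<le> 2"
    hence "set_commutes (G\<lparr>carrier := H\<rparr>) (carrier (G\<lparr>carrier := H\<rparr>))" by (rule H.small_comm)
    thus False using assms(2) by (simp add: set_commutes_def)
  qed
  hence "3 \<le> k" by simp
  thus ?thesis using k p_gt1 by (simp add: power_increasing)
qed

lemma sub_p3_central:
  assumes "subgroup H G" "card H = p ^ 3" "x \<in> H" "y \<in> H" "b \<in> H"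
  shows "(x \<otimes> y \<otimes> inv x \<otimes> inv y) \<otimes> b = b \<otimes> (x \<otimes> y \<otimes> inv x \<otimes> inv y)"
proof -
  interpret H: pgrp "G\<lparr>carrier := H\<rparr>" p 3 by (rule sub_pgrp[OF assms(1,2)])
  have "(x \<otimes>\<^bsub>G\<lparr>carrier := H\<rparr>\<^esub> y \<otimes>\<^bsub>G\<lparr>carrier := H\<rparr>\<^esub> inv\<^bsub>G\<lparr>carrier := H\<rparr>\<^esub> x \<otimes>\<^bsub>G\<lparr>carrier := H\<rparr>\<^esub> inv\<^bsub>G\<lparr>carrier := H\<rparr>\<^esub> y) \<otimes>\<^bsub>G\<lparr>carrier := H\<rparr>\<^esub> b
     = b \<otimes>\<^bsub>G\<lparr>carrier := H\<rparr>\<^esub> (x \<otimes>\<^bsub>G\<lparr>carrier := H\<rparr>\<^esub> y \<otimes>\<^bsub>G\<lparr>carrier := H\<rparr>\<^esub> inv\<^bsub>G\<lparr>carrier := H\<rparr>\<^esub> x \<otimes>\<^bsub>G\<lparr>carrier := H\<rparr>\<^esub> inv\<^bsub>G\<lparr>carrier := H\<rparr>\<^esub> y)"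
    using assms by (intro H.p3_central) auto
  thus ?thesis using assms(1,3,4) by simp
qed

lemma sub_p3_center:
  assumes "subgroup H G" "card H = p ^ 3" "\<not> set_commutes G H"
  shows "card {h \<in> H. \<forall>k\<in>H. h \<otimes> k = k \<otimes> h} = p"
proof -
  interpret H: pgrp "G\<lparr>carrier := H\<rparr>" p 3 by (rule sub_pgrp[OF assms(1,2)])
  have "card (group_center (G\<lparr>carrier := H\<rparr>)) = p"
    using assms(3) by (intro H.p3_center) (auto simp: set_commutes_def)
  moreover have "group_center (G\<lparr>carrier := H\<rparr>) = {h \<in> H. \<forall>k\<in>H. h \<otimes> k = k \<otimes> h}"
    by (auto simp: group_center_def centralizer_def)
  ultimately show ?thesis by simp
qed

end

lemma (in group) conj_action_sub:
  assumes "subgroup A G"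
  shows "group_action (G\<lparr>carrier := A\<rparr>) (carrier G) (\<lambda>g. (\<lambda>h \<in> carrier G. g \<otimes> h \<otimes> (inv g)))"
proof -
  have h: "(\<lambda>g. (\<lambda>h \<in> carrier G. g \<otimes> h \<otimes> (inv g))) \<in> hom G (BijGroup (carrier G))"
    by (rule conjugation_is_hom)
  have "(\<lambda>g. (\<lambda>h \<in> carrier G. g \<otimes> h \<otimes> (inv g))) \<in> hom (G\<lparr>carrier := A\<rparr>) (BijGroup (carrier G))"
  proof -
    let ?f = "(\<lambda>g. (\<lambda>h \<in> carrier G. g \<otimes> h \<otimes> (inv g)))"
    have h1: "?f \<in> carrier G \<rightarrow> carrier (BijGroup (carrier G))"
      and h2: "\<And>x y. x \<in> carrier G \<Longrightarrow> y \<in> carrier G \<Longrightarrow> ?f (x \<otimes> y) = ?f x \<otimes>\<^bsub>BijGroup (carrier G)\<^esub> ?f y"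
      using h unfolding hom_def by blast+
    have A: "A \<subseteq> carrier G" using subgroup.subset[OF assms] .
    show ?thesis unfolding hom_def
    proof (intro CollectI conjI ballI)
      show "?f \<in> carrier (G\<lparr>carrier := A\<rparr>) \<rightarrow> carrier (BijGroup (carrier G))"
        using h1 A by (simp add: Pi_iff subset_iff)
      fix x y assume "x \<in> carrier (G\<lparr>carrier := A\<rparr>)" "y \<in> carrier (G\<lparr>carrier := A\<rparr>)"
      hence "x \<in> carrier G" "y \<in> carrier G" using A by auto
      thus "?f (x \<otimes>\<^bsub>G\<lparr>carrier := A\<rparr>\<^esub> y) = ?f x \<otimes>\<^bsub>BijGroup (carrier G)\<^esub> ?f y"
        using h2 by simp
    qed
  qed
  thus ?thesis unfolding group_action_def group_hom_def group_hom_axioms_def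
    using subgroup_imp_group[OF assms] group_BijGroup by blast
qed

lemma (in group) hom_preimage_subgroup:
  assumes "group_hom G H f" "subgroup S H"
  shows "subgroup {a \<in> carrier G. f a \<in> S} G"
proof -
  interpret f: group_hom G H f by fact
  show ?thesis
  proof
    show "{a \<in> carrier G. f a \<in> S} \<subseteq> carrier G" by auto
    show "\<one> \<in> {a \<in> carrier G. f a \<in> S}" using subgroup.one_closed[OF assms(2)] by simp
    fix x y assume x: "x \<in> {a \<in> carrier G. f a \<in> S}" and y: "y \<in> {a \<in> carrier G. f a \<in> S}"
    show "x \<otimes> y \<in> {a \<in> carrier G. f a \<in> S}" using x y subgroup.m_closed[OF assms(2)] by simp
  next
    fix x assume x: "x \<in> {a \<in> carrier G. f a \<in> S}"
    show "inv x \<in> {a \<in> carrier G. f a \<in> S}" using x subgroup.m_inv_closed[OF assms(2)] by simp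
  qed
qed

lemma (in group) cancel1: "x \<in> carrier G \<Longrightarrow> y \<in> carrier G \<Longrightarrow> x \<otimes> (inv x \<otimes> y) = y"
  by (simp add: m_assoc[symmetric])

lemma (in group) cmt_central_left:
  assumes "m \<in> carrier G" "b \<in> carrier G" "w \<in> group_center G"
  shows "(m \<otimes> w) \<otimes> b \<otimes> inv (m \<otimes> w) \<otimes> inv b = m \<otimes> b \<otimes> inv m \<otimes> inv b"
proof -
  have wc: "w \<in> carrier G" and wb: "w \<otimes> b = b \<otimes> w" using assms by (auto simp: center_iff)
  have "(m \<otimes> w) \<otimes> b \<otimes> inv (m \<otimes> w) \<otimes> inv b = m \<otimes> (w \<otimes> b) \<otimes> (inv w \<otimes> inv m) \<otimes> inv b"
    using assms(1,2) wc by (simp add: inv_mult_group m_assoc)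
  also have "\<dots> = m \<otimes> (b \<otimes> w) \<otimes> (inv w \<otimes> inv m) \<otimes> inv b" by (simp only: wb)
  also have "\<dots> = m \<otimes> b \<otimes> inv m \<otimes> inv b" using assms(1,2) wc by (simp add: m_assoc cancel1)
  finally show ?thesis .
qed

lemma (in group) cmt_central_right:
  assumes "a \<in> carrier G" "m \<in> carrier G" "w \<in> group_center G"
  shows "a \<otimes> (m \<otimes> w) \<otimes> inv a \<otimes> inv (m \<otimes> w) = a \<otimes> m \<otimes> inv a \<otimes> inv m"
proof -
  have wc: "w \<in> carrier G" and wa: "w \<otimes> inv a = inv a \<otimes> w" using assms by (auto simp: center_iff)
  have "a \<otimes> (m \<otimes> w) \<otimes> inv a \<otimes> inv (m \<otimes> w) = a \<otimes> m \<otimes> (w \<otimes> inv a) \<otimes> (inv w \<otimes> inv m)"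
    using assms(1,2) wc by (simp add: inv_mult_group m_assoc)
  also have "\<dots> = a \<otimes> m \<otimes> (inv a \<otimes> w) \<otimes> (inv w \<otimes> inv m)" by (simp only: wa)
  also have "\<dots> = a \<otimes> m \<otimes> inv a \<otimes> inv m" using assms(1,2) wc by (simp add: m_assoc cancel1)
  finally show ?thesis .
qed

lemma (in group) cmt_central:
  assumes "m1 \<in> carrier G" "m2 \<in> carrier G" "w1 \<in> group_center G" "w2 \<in> group_center G"
  shows "(m1 \<otimes> w1) \<otimes> (m2 \<otimes> w2) \<otimes> inv (m1 \<otimes> w1) \<otimes> inv (m2 \<otimes> w2) = m1 \<otimes> m2 \<otimes> inv m1 \<otimes> inv m2"
proof -
  have w: "w1 \<in> carrier G" "w2 \<in> carrier G" using assms by (auto simp: center_iff)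
  have "(m1 \<otimes> w1) \<otimes> (m2 \<otimes> w2) \<otimes> inv (m1 \<otimes> w1) \<otimes> inv (m2 \<otimes> w2) = m1 \<otimes> (m2 \<otimes> w2) \<otimes> inv m1 \<otimes> inv (m2 \<otimes> w2)"
    using assms w by (intro cmt_central_left) auto
  also have "\<dots> = m1 \<otimes> m2 \<otimes> inv m1 \<otimes> inv m2" using assms by (intro cmt_central_right) auto
  finally show ?thesis .
qed

definition PZ :: "('a, 'b) monoid_scheme \<Rightarrow> 'a set \<Rightarrow> 'a set" where
  "PZ G H = {h \<otimes>\<^bsub>G\<^esub> w | h w. h \<in> H \<and> w \<in> group_center G}"

lemma (in group) PZ_subgroup:
  assumes "subgroup H G" shows "subgroup (PZ G H) G"
proof
  have Hc: "H \<subseteq> carrier G" using assms subgroup.subset by blast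
  show "PZ G H \<subseteq> carrier G" using Hc by (auto simp: PZ_def center_iff)
  have "\<one> = \<one> \<otimes> \<one>" by simp
  moreover have "\<one> \<in> H" using subgroup.one_closed[OF assms] .
  moreover have "\<one> \<in> group_center G" using subgroup.one_closed[OF center_subgroup] .
  ultimately show "\<one> \<in> PZ G H" unfolding PZ_def by blast
  fix x y assume x: "x \<in> PZ G H" and y: "y \<in> PZ G H"
  then obtain h1 w1 h2 w2 where e: "x = h1 \<otimes> w1" "y = h2 \<otimes> w2" "h1 \<in> H" "h2 \<in> H"
    "w1 \<in> group_center G" "w2 \<in> group_center G" unfolding PZ_def by blast
  have c: "h1 \<in> carrier G" "h2 \<in> carrier G" "w1 \<in> carrier G" "w2 \<in> carrier G" using e Hc by (auto simp: center_iff)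
  have "w1 \<otimes> h2 = h2 \<otimes> w1" using e(5) c by (auto simp: center_iff)
  hence "h1 \<otimes> (w1 \<otimes> h2) \<otimes> w2 = h1 \<otimes> (h2 \<otimes> w1) \<otimes> w2" by simp
  hence "x \<otimes> y = (h1 \<otimes> h2) \<otimes> (w1 \<otimes> w2)" using e(1,2) c by (simp add: m_assoc)
  moreover have "h1 \<otimes> h2 \<in> H" using e subgroup.m_closed[OF assms] by blast
  moreover have "w1 \<otimes> w2 \<in> group_center G" using e subgroup.m_closed[OF center_subgroup] by blast
  ultimately show "x \<otimes> y \<in> PZ G H" unfolding PZ_def by blast
next
  have Hc: "H \<subseteq> carrier G" using assms subgroup.subset by blast
  fix x assume x: "x \<in> PZ G H"
  then obtain h w where e: "x = h \<otimes> w" "h \<in> H" "w \<in> group_center G" unfolding PZ_def by blast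
  have c: "h \<in> carrier G" "w \<in> carrier G" using e Hc by (auto simp: center_iff)
  have "w \<otimes> inv h = inv h \<otimes> w" using e(3) c by (auto simp: center_iff)
  hence "inv w \<otimes> inv h = inv h \<otimes> inv w" using c by (intro comm_inv) auto
  hence "inv x = inv h \<otimes> inv w" using e(1) c by (simp add: inv_mult_group)
  moreover have "inv h \<in> H" using e subgroup.m_inv_closed[OF assms] by blast
  moreover have "inv w \<in> group_center G" using e subgroup.m_inv_closed[OF center_subgroup] by blast
  ultimately show "inv x \<in> PZ G H" unfolding PZ_def by blast
qed

lemma (in group) PZ_sup: assumes "subgroup H G" shows "H \<subseteq> PZ G H"
proof
  fix h assume "h \<in> H"
  hence hc: "h \<in> carrier G" using assms subgroup.subset by blast
  hence "h = h \<otimes> \<one>" by simp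
  moreover have "\<one> \<in> group_center G" using subgroup.one_closed[OF center_subgroup] .
  ultimately show "h \<in> PZ G H" unfolding PZ_def using \<open>h \<in> H\<close> by blast
qed

lemma (in group) PZ_Z: assumes "subgroup H G" "z \<in> group_center G" shows "z \<in> PZ G H"
proof -
  have "z \<in> carrier G" using assms by (auto simp: center_iff)
  hence "z = \<one> \<otimes> z" by simp
  thus ?thesis unfolding PZ_def using assms subgroup.one_closed by blast
qed

lemma (in group) lc_Suc:
  "lower_central G (Suc i) = generate G (\<Union>a \<in> lower_central G i. \<Union>b \<in> carrier G. {a \<otimes> b \<otimes> inv a \<otimes> inv b})"
  by (simp add: commutator_subgroup_def)

lemma (in group) gen_triv: assumes "S \<subseteq> {\<one>}" shows "generate G S = {\<one>}"
  using generate_subgroup_incl[OF assms triv_subgroup] generate.one[of G S] by blast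


lemma (in group) conj_fix:
  assumes "g \<in> carrier G" "y \<in> carrier G" "g \<otimes> y \<otimes> inv g = y"
  shows "g \<otimes> y = y \<otimes> g"
proof -
  have "g \<otimes> y = (g \<otimes> y \<otimes> inv g) \<otimes> g" using assms(1,2) by (simp add: m_assoc)
  also have "\<dots> = y \<otimes> g" by (simp only: assms(3))
  finally show ?thesis .
qed

context pgrp
begin

lemma orb_bound:
  assumes A: "subgroup A G" and y: "y \<in> carrier G"
    and cm: "\<forall>a\<in>A. a \<otimes> y \<otimes> inv a \<otimes> inv y \<in> group_center G"
  shows "card A \<le> card (group_center G) * card (A \<inter> centralizer G {y})"
proof -
  define \<phi> where "\<phi> = (\<lambda>g. (\<lambda>h \<in> carrier G. g \<otimes> h \<otimes> (inv g)))"
  interpret GA: group_action "G\<lparr>carrier := A\<rparr>" "carrier G" \<phi> unfolding \<phi>_def by (rule conj_action_sub[OF A])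
  have Ac: "A \<subseteq> carrier G" using subgroup.subset[OF A] .
  have os: "card (orbit (G\<lparr>carrier := A\<rparr>) \<phi> y) * card (stabilizer (G\<lparr>carrier := A\<rparr>) \<phi> y) = card A"
    using GA.orbit_stabilizer_theorem[OF y] by (simp add: order_def)
  have "orbit (G\<lparr>carrier := A\<rparr>) \<phi> y \<subseteq> (\<lambda>w. w \<otimes> y) ` group_center G"
  proof
    fix u assume "u \<in> orbit (G\<lparr>carrier := A\<rparr>) \<phi> y"
    then obtain g where g: "g \<in> A" "u = \<phi> g y" unfolding orbit_def by auto
    have gc: "g \<in> carrier G" using g Ac by blast
    have "u = g \<otimes> y \<otimes> inv g" using g y by (simp add: \<phi>_def)
    also have "\<dots> = (g \<otimes> y \<otimes> inv g \<otimes> inv y) \<otimes> y" using gc y by (simp add: m_assoc)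
    finally show "u \<in> (\<lambda>w. w \<otimes> y) ` group_center G" using cm g by blast
  qed
  hence "card (orbit (G\<lparr>carrier := A\<rparr>) \<phi> y) \<le> card ((\<lambda>w. w \<otimes> y) ` group_center G)"
    by (rule card_mono[rotated]) (simp add: finZ)
  also have "\<dots> \<le> card (group_center G)" by (rule card_image_le) (simp add: finZ)
  finally have c1: "card (orbit (G\<lparr>carrier := A\<rparr>) \<phi> y) \<le> card (group_center G)" .
  have "stabilizer (G\<lparr>carrier := A\<rparr>) \<phi> y \<subseteq> A \<inter> centralizer G {y}"
  proof
    fix g assume "g \<in> stabilizer (G\<lparr>carrier := A\<rparr>) \<phi> y"
    hence g: "g \<in> A" "\<phi> g y = y" unfolding stabilizer_def by auto
    have gc: "g \<in> carrier G" using g Ac by blast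
    have "g \<otimes> y \<otimes> inv g = y" using g y by (simp add: \<phi>_def)
    hence "g \<otimes> y = y \<otimes> g" using gc y by (rule conj_fix[rotated 2])
    thus "g \<in> A \<inter> centralizer G {y}" using g gc by (simp add: centralizer_def)
  qed
  hence c2: "card (stabilizer (G\<lparr>carrier := A\<rparr>) \<phi> y) \<le> card (A \<inter> centralizer G {y})"
    by (rule card_mono[rotated]) (use fin_sub[OF A] in simp)
  show ?thesis using os c1 c2 mult_le_mono by metis
qed

end

locale p4grp = pgrp +
  assumes n4: "n = 4"
begin

abbreviation "Z \<equiv> group_center G"

lemma card_p4: "card (carrier G) = p ^ 4" using card_carrier n4 by simp

lemma sub_eq_carrier: assumes "subgroup K G" "card K = p ^ 4" shows "K = carrier G"
  using card_subset_eq[OF fin subgroup.subset[OF assms(1)]] assms(2) card_p4 by simp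

lemma card_p3: assumes "subgroup K G" "p ^ 3 \<le> card K" "K \<noteq> carrier G" shows "card K = p ^ 3"
proof -
  obtain k where k: "k \<le> n" "card K = p ^ k" using sub_card assms(1) by blast
  have "k \<noteq> 4" using sub_eq_carrier assms(1,3) k by auto
  moreover have "3 \<le> k" using assms(2) k p_gt1 power_le_imp_le_exp by metis
  ultimately have "k = 3" using k n4 by simp
  thus ?thesis using k by simp
qed

lemma maxl:
  assumes "subgroup H G" "card H = p ^ 3" "subgroup K G" "H \<subseteq> K" "H \<noteq> K"
  shows "K = carrier G"
proof -
  have "p * p ^ 3 \<le> card K" using sub_step[OF assms(1,3,4,5)] assms(2) by simp
  moreover have "card K \<le> p ^ 4" using card_mono[OF fin subgroup.subset[OF assms(3)]] card_p4 by simp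
  ultimately have "card K = p ^ 4" by (simp add: power_Suc[symmetric] del: power_Suc)
  thus ?thesis using sub_eq_carrier assms(3) by simp
qed

lemma p3_ne_carrier: assumes "card H = p ^ 3" shows "H \<noteq> carrier G"
proof
  assume "H = carrier G"
  hence "p ^ 3 = p ^ 4" using assms card_p4 by simp
  thus False using p_gt1 by simp
qed

lemma max_sub: assumes "subgroup H G" "card H = p ^ 3" shows "maximal_subgroup G H"
  unfolding maximal_subgroup_def using assms maxl p3_ne_carrier by blast

lemma CCfail:
  assumes "\<not> CC_property G"
  obtains H z where "subgroup H G" "\<not> set_commutes G H" "card H = p ^ 3" "z \<in> Z" "z \<notin> H"
proof -
  obtain H g where H: "subgroup H G" "\<not> set_commutes G H" and g: "g \<in> centralizer G H" "g \<notin> H"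
    using assms unfolding CC_property_def by blast
  have gc: "g \<in> carrier G" using g by (simp add: centralizer_def)
  have Hc: "H \<subseteq> carrier G" using subgroup.subset[OF H(1)] .
  have "H \<noteq> carrier G" using g gc by blast
  hence cH: "card H = p ^ 3" using card_p3 sub_small H by blast
  let ?C = "centralizer G {g}"
  have sC: "subgroup ?C G" using gc by (intro centralizer_subgroup) auto
  have "H \<subseteq> ?C" using g Hc by (auto simp: centralizer_def)
  moreover have "g \<in> ?C" using gc by (simp add: centralizer_def)
  ultimately have "?C = carrier G" using maxl[OF H(1) cH sC] g(2) by blast
  hence "\<forall>h\<in>carrier G. h \<in> ?C" by simp
  hence "\<forall>h\<in>carrier G. h \<otimes> g = g \<otimes> h" by (simp add: centralizer_def)
  hence "g \<in> Z" using gc by (simp add: center_iff)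
  thus ?thesis using that H cH g(2) by blast
qed

lemma PZ_eq: assumes "subgroup H G" "card H = p ^ 3" "z \<in> Z" "z \<notin> H" shows "PZ G H = carrier G"
  using maxl[OF assms(1,2) PZ_subgroup[OF assms(1)] PZ_sup[OF assms(1)]] PZ_Z[OF assms(1,3)] assms(4) by blast

lemma Zcases: assumes "\<not> set_commutes G (carrier G)" shows "card Z = p \<or> card Z = p ^ 2"
proof -
  obtain k where k: "card Z = p ^ k" using sub_card[OF center_subgroup] by blast
  have "p \<le> p ^ k" using center_big k n4 by simp
  hence "1 \<le> k" using p_gt1 by (metis power_one_right power_le_imp_le_exp)
  have "p * p * card Z \<le> p ^ 4" using nonab_bound[OF assms] n4 by simp
  hence "p ^ (2 + k) \<le> p ^ 4" using k by (simp add: power_add power2_eq_square)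
  hence "2 + k \<le> 4" using p_gt1 power_le_imp_le_exp by blast
  hence "k = 1 \<or> k = 2" using \<open>1 \<le> k\<close> by auto
  thus ?thesis using k by auto
qed

lemma cent_p3:
  assumes cl2: "\<forall>a\<in>carrier G. \<forall>b\<in>carrier G. a \<otimes> b \<otimes> inv a \<otimes> inv b \<in> Z"
    and cZ: "card Z = p" and x: "x \<in> carrier G" "x \<notin> Z"
  shows "card (centralizer G {x}) = p ^ 3"
proof -
  let ?C = "centralizer G {x}"
  have sC: "subgroup ?C G" using x by (intro centralizer_subgroup) auto
  have "\<forall>a\<in>carrier G. a \<otimes> x \<otimes> inv a \<otimes> inv x \<in> Z" using cl2 x(1) by blast
  hence "card (carrier G) \<le> p * card (carrier G \<inter> ?C)"
    using orb_bound[OF subgroup_self x(1)] cZ by simp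
  moreover have "carrier G \<inter> ?C = ?C" by (auto simp: centralizer_def)
  ultimately have "p * p ^ 3 \<le> p * card ?C" using card_p4 by (simp add: power_Suc[symmetric] del: power_Suc)
  hence "p ^ 3 \<le> card ?C" using p_gt1 by simp
  moreover have "?C \<noteq> carrier G"
  proof
    assume "?C = carrier G"
    hence "\<forall>h\<in>carrier G. h \<in> ?C" by simp
    hence "\<forall>h\<in>carrier G. h \<otimes> x = x \<otimes> h" by (simp add: centralizer_def)
    hence "x \<in> Z" using x by (simp add: center_iff)
    thus False using x by simp
  qed
  ultimately show ?thesis using card_p3 sC by blast
qed

lemma no_class2:
  assumes cl2: "\<forall>a\<in>carrier G. \<forall>b\<in>carrier G. a \<otimes> b \<otimes> inv a \<otimes> inv b \<in> Z"
    and cZ: "card Z = p"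
  shows "set_commutes G (carrier G)"
proof (rule ccontr)
  assume "\<not> set_commutes G (carrier G)"
  then obtain x y where x: "x \<in> carrier G" and y: "y \<in> carrier G" and ne: "x \<otimes> y \<noteq> y \<otimes> x"
    unfolding set_commutes_def by blast
  have xZ: "x \<notin> Z" using x y ne by (auto simp: center_iff)
  let ?Cx = "centralizer G {x}" and ?Cy = "centralizer G {y}"
  have sCx: "subgroup ?Cx G" using x by (intro centralizer_subgroup) auto
  have cCx: "card ?Cx = p ^ 3" using cent_p3[OF cl2 cZ x xZ] .
  have "\<forall>a\<in>?Cx. a \<otimes> y \<otimes> inv a \<otimes> inv y \<in> Z" using cl2 y by (auto simp: centralizer_def)
  hence "card ?Cx \<le> p * card (?Cx \<inter> ?Cy)"
    using orb_bound[OF sCx y] cZ by simp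
  hence "p * (p * p) \<le> p * card (?Cx \<inter> ?Cy)" using cCx by (simp add: power3_eq_cube mult.assoc)
  hence big: "p * p \<le> card (?Cx \<inter> ?Cy)" using p_gt1 by simp
  have "\<not> (?Cx \<inter> ?Cy \<subseteq> Z)"
  proof
    assume "?Cx \<inter> ?Cy \<subseteq> Z"
    hence "card (?Cx \<inter> ?Cy) \<le> p" using card_mono[OF finZ] cZ by metis
    hence "p * p \<le> p" using big by linarith
    moreover have "p * 2 \<le> p * p" using p_gt1 by (intro mult_le_mono2) simp
    ultimately show False using p_gt1 by linarith
  qed
  then obtain w where w: "w \<in> ?Cx" "w \<in> ?Cy" "w \<notin> Z" by blast
  have wc: "w \<in> carrier G" using w by (simp add: centralizer_def)
  let ?K = "centralizer G {w}"
  have sK: "subgroup ?K G" using wc by (intro centralizer_subgroup) auto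
  have cK: "card ?K = p ^ 3" using cent_p3[OF cl2 cZ wc w(3)] .
  have xK: "x \<in> ?K" using w(1) x by (simp add: centralizer_def)
  have yK: "y \<in> ?K" using w(2) y by (simp add: centralizer_def)
  have "\<not> set_commutes G ?K" using xK yK ne unfolding set_commutes_def by blast
  hence cc: "card {h \<in> ?K. \<forall>k\<in>?K. h \<otimes> k = k \<otimes> h} = p" using sub_p3_center[OF sK cK] by simp
  have sub: "insert w Z \<subseteq> {h \<in> ?K. \<forall>k\<in>?K. h \<otimes> k = k \<otimes> h}"
  proof
    fix u assume "u \<in> insert w Z"
    thus "u \<in> {h \<in> ?K. \<forall>k\<in>?K. h \<otimes> k = k \<otimes> h}"
    proof
      assume "u = w" thus ?thesis using wc by (auto simp: centralizer_def)
    next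
      assume "u \<in> Z" thus ?thesis using wc by (auto simp: centralizer_def center_iff)
    qed
  qed
  have "finite {h \<in> ?K. \<forall>k\<in>?K. h \<otimes> k = k \<otimes> h}" using fin_sub[OF sK] by simp
  hence "card (insert w Z) \<le> p" using card_mono[OF _ sub] cc by simp
  moreover have "card (insert w Z) = p + 1" using w(3) finZ cZ by simp
  ultimately show False by simp
qed


lemma cent_ne: assumes "x \<in> carrier G" "x \<notin> Z" shows "centralizer G {x} \<noteq> carrier G"
proof
  assume "centralizer G {x} = carrier G"
  hence "\<forall>h\<in>carrier G. h \<in> centralizer G {x}" by simp
  hence "\<forall>h\<in>carrier G. h \<otimes> x = x \<otimes> h" by (simp add: centralizer_def)
  hence "x \<in> Z" using assms by (simp add: center_iff)
  thus False using assms by simp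
qed

lemma lc1_eq: "lower_central G 1 = generate G (\<Union>a \<in> carrier G. \<Union>b \<in> carrier G. {a \<otimes> b \<otimes> inv a \<otimes> inv b})"
  using lc_Suc[of 0] by simp

lemma lc2_eq: "lower_central G 2 = generate G (\<Union>a \<in> lower_central G 1. \<Union>b \<in> carrier G. {a \<otimes> b \<otimes> inv a \<otimes> inv b})"
  using lc_Suc[of 1] by (simp add: numeral_2_eq_2)

lemma lc3_eq: "lower_central G 3 = generate G (\<Union>a \<in> lower_central G 2. \<Union>b \<in> carrier G. {a \<otimes> b \<otimes> inv a \<otimes> inv b})"
  using lc_Suc[of 2] by (simp add: numeral_3_eq_3)

lemma all_cmt_Z_lc2:
  assumes "\<forall>a\<in>carrier G. \<forall>b\<in>carrier G. a \<otimes> b \<otimes> inv a \<otimes> inv b \<in> Z"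
  shows "lower_central G 2 = {\<one>}"
proof -
  have "lower_central G 1 \<subseteq> Z" unfolding lc1_eq
    by (rule generate_subgroup_incl[OF _ center_subgroup]) (use assms in blast)
  hence "(\<Union>a \<in> lower_central G 1. \<Union>b \<in> carrier G. {a \<otimes> b \<otimes> inv a \<otimes> inv b}) \<subseteq> {\<one>}"
    by (auto intro!: comm_cmt_one simp: center_iff)
  thus ?thesis unfolding lc2_eq by (rule gen_triv)
qed

lemma class3_of_Zp:
  assumes nc: "\<not> set_commutes G (carrier G)" and cZ: "card Z = p"
  shows "nilpotency_class G 3"
proof -
  let ?Q = "G Mod Z"
  have "card (rcosets Z) * p = p ^ 4" using lagrange[OF center_subgroup] cZ ord n4 by simp
  moreover have "(p::nat) ^ 4 = p ^ 3 * p" by (simp add: power_Suc2[symmetric])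
  ultimately have "card (rcosets Z) = p ^ 3" using p_gt1 by simp
  hence oQ: "order ?Q = p ^ 3" by (simp add: order_def FactGroup_def)
  interpret Q: pgrp ?Q p 3
    using normal.factorgroup_is_group[OF center_normal] oQ prime by (simp add: pgrp_def pgrp_axioms_def)
  have hom: "group_hom G ?Q (\<lambda>a. Z #> a)"
    unfolding group_hom_def group_hom_axioms_def
    using normal.r_coset_hom_Mod[OF center_normal] is_group Q.is_group by blast
  let ?N = "{a \<in> carrier G. Z #> a \<in> group_center ?Q}"
  have sN: "subgroup ?N G" by (rule hom_preimage_subgroup[OF hom Q.center_subgroup])
  have inQ: "Z #> b \<in> carrier ?Q" if "b \<in> carrier G" for b using that by (auto simp: carrier_FactGroup)
  have cN: "x \<otimes> y \<otimes> inv x \<otimes> inv y \<in> ?N" if x: "x \<in> carrier G" and y: "y \<in> carrier G" for x y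
  proof -
    have e: "Z #> (x \<otimes> y \<otimes> inv x \<otimes> inv y) =
      (Z #> x) \<otimes>\<^bsub>?Q\<^esub> (Z #> y) \<otimes>\<^bsub>?Q\<^esub> inv\<^bsub>?Q\<^esub> (Z #> x) \<otimes>\<^bsub>?Q\<^esub> inv\<^bsub>?Q\<^esub> (Z #> y)"
      by (rule quot_cmt[OF center_normal x y])
    have c: "(Z #> x) \<otimes>\<^bsub>?Q\<^esub> (Z #> y) \<otimes>\<^bsub>?Q\<^esub> inv\<^bsub>?Q\<^esub> (Z #> x) \<otimes>\<^bsub>?Q\<^esub> inv\<^bsub>?Q\<^esub> (Z #> y) \<in> group_center ?Q"
      unfolding Q.center_iff
    proof (intro conjI ballI)
      show "(Z #> x) \<otimes>\<^bsub>?Q\<^esub> (Z #> y) \<otimes>\<^bsub>?Q\<^esub> inv\<^bsub>?Q\<^esub> (Z #> x) \<otimes>\<^bsub>?Q\<^esub> inv\<^bsub>?Q\<^esub> (Z #> y) \<in> carrier ?Q"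
        by (rule Q.m_closed[OF Q.m_closed[OF Q.m_closed[OF inQ[OF x] inQ[OF y]] Q.inv_closed[OF inQ[OF x]]] Q.inv_closed[OF inQ[OF y]]])
      fix g assume g: "g \<in> carrier ?Q"
      show "(Z #> x) \<otimes>\<^bsub>?Q\<^esub> (Z #> y) \<otimes>\<^bsub>?Q\<^esub> inv\<^bsub>?Q\<^esub> (Z #> x) \<otimes>\<^bsub>?Q\<^esub> inv\<^bsub>?Q\<^esub> (Z #> y) \<otimes>\<^bsub>?Q\<^esub> g =
        g \<otimes>\<^bsub>?Q\<^esub> ((Z #> x) \<otimes>\<^bsub>?Q\<^esub> (Z #> y) \<otimes>\<^bsub>?Q\<^esub> inv\<^bsub>?Q\<^esub> (Z #> x) \<otimes>\<^bsub>?Q\<^esub> inv\<^bsub>?Q\<^esub> (Z #> y))"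
        using inQ x y g by (intro Q.p3_central) auto
    qed
    show ?thesis
    proof (rule CollectI, rule conjI)
      show "x \<otimes> y \<otimes> inv x \<otimes> inv y \<in> carrier G" using x y by simp
      show "Z #> (x \<otimes> y \<otimes> inv x \<otimes> inv y) \<in> group_center ?Q" by (subst e) (rule c)
    qed
  qed
  have NZ: "a \<otimes> b \<otimes> inv a \<otimes> inv b \<in> Z" if a: "a \<in> ?N" and b: "b \<in> carrier G" for a b
  proof -
    have ac: "a \<in> carrier G" and az: "Z #> a \<in> group_center ?Q" using a by auto
    have "\<forall>g\<in>carrier ?Q. (Z #> a) \<otimes>\<^bsub>?Q\<^esub> g = g \<otimes>\<^bsub>?Q\<^esub> (Z #> a)"
      using az unfolding Q.center_iff by blast
    hence "(Z #> a) \<otimes>\<^bsub>?Q\<^esub> (Z #> b) = (Z #> b) \<otimes>\<^bsub>?Q\<^esub> (Z #> a)" using inQ[OF b] by blast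
    thus ?thesis by (rule quot_ker[OF center_normal ac b])
  qed
  have L1N: "lower_central G 1 \<subseteq> ?N" unfolding lc1_eq
    by (rule generate_subgroup_incl[OF _ sN]) (use cN in blast)
  have L2Z: "lower_central G 2 \<subseteq> Z" unfolding lc2_eq
  proof (rule generate_subgroup_incl[OF _ center_subgroup])
    show "(\<Union>a \<in> lower_central G 1. \<Union>b \<in> carrier G. {a \<otimes> b \<otimes> inv a \<otimes> inv b}) \<subseteq> Z"
    proof (intro subsetI)
      fix u assume "u \<in> (\<Union>a \<in> lower_central G 1. \<Union>b \<in> carrier G. {a \<otimes> b \<otimes> inv a \<otimes> inv b})"
      then obtain a b where ab: "a \<in> lower_central G 1" "b \<in> carrier G" "u = a \<otimes> b \<otimes> inv a \<otimes> inv b" by blast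
      have "a \<in> ?N" using ab(1) L1N by blast
      thus "u \<in> Z" using NZ ab(2,3) by blast
    qed
  qed
  have L3: "lower_central G 3 = {\<one>}"
  proof -
    have "(\<Union>a \<in> lower_central G 2. \<Union>b \<in> carrier G. {a \<otimes> b \<otimes> inv a \<otimes> inv b}) \<subseteq> {\<one>}"
      using L2Z by (auto intro!: comm_cmt_one simp: center_iff)
    thus ?thesis unfolding lc3_eq by (rule gen_triv)
  qed
  obtain x y where x: "x \<in> carrier G" and y: "y \<in> carrier G" and ne: "x \<otimes> y \<noteq> y \<otimes> x"
    using nc unfolding set_commutes_def by blast
  have L0: "lower_central G 0 \<noteq> {\<one>}"
  proof
    assume "lower_central G 0 = {\<one>}"
    hence "card (carrier G) = 1" by simp
    thus False using card_p4 p_gt1 by simp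
  qed
  have L1: "lower_central G 1 \<noteq> {\<one>}"
  proof
    assume a: "lower_central G 1 = {\<one>}"
    have "x \<otimes> y \<otimes> inv x \<otimes> inv y \<in> lower_central G 1" unfolding lc1_eq
      by (rule generate.incl) (use x y in blast)
    hence "x \<otimes> y \<otimes> inv x \<otimes> inv y = \<one>" using a by simp
    thus False using cmt_one_comm[OF x y] ne by simp
  qed
  have L2: "lower_central G 2 \<noteq> {\<one>}"
  proof
    assume a: "lower_central G 2 = {\<one>}"
    have "\<forall>u\<in>carrier G. \<forall>v\<in>carrier G. u \<otimes> v \<otimes> inv u \<otimes> inv v \<in> Z"
    proof (intro ballI)
      fix u v assume u: "u \<in> carrier G" and v: "v \<in> carrier G"
      let ?c = "u \<otimes> v \<otimes> inv u \<otimes> inv v"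
      have c1: "?c \<in> lower_central G 1" unfolding lc1_eq
        by (rule generate.incl) (use u v in blast)
      have cc: "?c \<in> carrier G" using u v by simp
      show "?c \<in> Z" unfolding center_iff
      proof (intro conjI ballI)
        show "?c \<in> carrier G" by fact
        fix d assume d: "d \<in> carrier G"
        have "?c \<otimes> d \<otimes> inv ?c \<otimes> inv d \<in> lower_central G 2" unfolding lc2_eq
          by (rule generate.incl) (use c1 d in blast)
        hence "?c \<otimes> d \<otimes> inv ?c \<otimes> inv d = \<one>" using a by simp
        thus "?c \<otimes> d = d \<otimes> ?c" by (rule cmt_one_comm[OF cc d])
      qed
    qed
    hence "set_commutes G (carrier G)" using no_class2 cZ by simp
    thus False using nc by simp
  qed
  show ?thesis unfolding nilpotency_class_def
  proof (intro conjI allI impI)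
    show "lower_central G 3 = {\<one>}" by (rule L3)
    fix i :: nat assume "i < 3"
    hence "i = 0 \<or> i = 1 \<or> i = 2" by auto
    thus "lower_central G i \<noteq> {\<one>}" using L0 L1 L2 by metis
  qed
qed

lemma PZ_comm:
  assumes M: "subgroup M G" and e: "PZ G M = carrier G" and cm: "set_commutes G M"
  shows "set_commutes G (carrier G)"
  unfolding set_commutes_def
proof (intro ballI)
  fix a b assume a: "a \<in> carrier G" and b: "b \<in> carrier G"
  have Mc: "M \<subseteq> carrier G" using subgroup.subset[OF M] .
  obtain m1 w1 where 1: "a = m1 \<otimes> w1" "m1 \<in> M" "w1 \<in> Z" using a e unfolding PZ_def by blast
  obtain m2 w2 where 2: "b = m2 \<otimes> w2" "m2 \<in> M" "w2 \<in> Z" using b e unfolding PZ_def by blast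
  have mc: "m1 \<in> carrier G" "m2 \<in> carrier G" using 1 2 Mc by auto
  have "a \<otimes> b \<otimes> inv a \<otimes> inv b = m1 \<otimes> m2 \<otimes> inv m1 \<otimes> inv m2"
    unfolding 1(1) 2(1) using cmt_central[OF mc 1(3) 2(3)] .
  also have "\<dots> = \<one>" using cm 1(2) 2(2) mc by (intro comm_cmt_one) (auto simp: set_commutes_def)
  finally show "a \<otimes> b = b \<otimes> a" using cmt_one_comm[OF a b] by simp
qed

lemma C2_case:
  assumes CC: "CC_property G" and nc: "\<not> set_commutes G (carrier G)" and cZ: "card Z = p ^ 2"
  shows "frattini G = Z"
proof
  show "frattini G \<subseteq> Z"
  proof
    fix y assume y: "y \<in> frattini G"
    hence yc: "y \<in> carrier G" and ym: "\<And>M. maximal_subgroup G M \<Longrightarrow> y \<in> M"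
      by (auto simp: frattini_def)
    show "y \<in> Z" unfolding center_iff
    proof (intro conjI ballI)
      show "y \<in> carrier G" by fact
      fix c assume c: "c \<in> carrier G"
      show "y \<otimes> c = c \<otimes> y"
      proof (cases "c \<in> Z")
        case True thus ?thesis using yc by (simp add: center_iff)
      next
        case False
        let ?C = "centralizer G {c}"
        have sC: "subgroup ?C G" using c by (intro centralizer_subgroup) auto
        have ZC: "Z \<subseteq> ?C" using c by (auto simp: center_iff centralizer_def)
        have cC: "c \<in> ?C" using c by (simp add: centralizer_def)
        have "p * card Z \<le> card ?C" using sub_step[OF center_subgroup sC ZC] cC False by blast
        hence "p ^ 3 \<le> card ?C" using cZ by (simp add: power3_eq_cube power2_eq_square mult.assoc)
        hence "card ?C = p ^ 3" using card_p3 sC cent_ne[OF c False] by blast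
        hence "maximal_subgroup G ?C" using max_sub sC by blast
        hence "y \<in> ?C" by (rule ym)
        thus ?thesis by (simp add: centralizer_def)
      qed
    qed
  qed
next
  show "Z \<subseteq> frattini G"
  proof
    fix z assume z: "z \<in> Z"
    have zc: "z \<in> carrier G" using z by (simp add: center_iff)
    have "z \<in> M" if M: "maximal_subgroup G M" for M
    proof (rule ccontr)
      assume zM: "z \<notin> M"
      have sM: "subgroup M G" using M by (simp add: maximal_subgroup_def)
      have "PZ G M \<noteq> M" using PZ_Z[OF sM z] zM by blast
      hence e: "PZ G M = carrier G" using M PZ_subgroup[OF sM] PZ_sup[OF sM] unfolding maximal_subgroup_def by blast
      show False
      proof (cases "set_commutes G M")
        case True thus False using PZ_comm[OF sM e] nc by simp
      next
        case False
        hence "centralizer G M \<subseteq> M" using CC sM unfolding CC_property_def by blast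
        moreover have "z \<in> centralizer G M" using z subgroup.subset[OF sM]
          by (auto simp: centralizer_def center_iff)
        ultimately show False using zM by blast
      qed
    qed
    thus "z \<in> frattini G" using zc by (simp add: frattini_def)
  qed
qed

lemma class3_CC: assumes "nilpotency_class G 3" shows "CC_property G"
proof (rule ccontr)
  assume "\<not> CC_property G"
  then obtain H z where H: "subgroup H G" "\<not> set_commutes G H" "card H = p ^ 3" "z \<in> Z" "z \<notin> H"
    by (rule CCfail)
  have e: "PZ G H = carrier G" using PZ_eq H by blast
  have Hc: "H \<subseteq> carrier G" using subgroup.subset[OF H(1)] .
  have "\<forall>a\<in>carrier G. \<forall>b\<in>carrier G. a \<otimes> b \<otimes> inv a \<otimes> inv b \<in> Z"
  proof (intro ballI)
    fix a b assume a: "a \<in> carrier G" and b: "b \<in> carrier G"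
    obtain m1 w1 where 1: "a = m1 \<otimes> w1" "m1 \<in> H" "w1 \<in> Z" using a e unfolding PZ_def by blast
    obtain m2 w2 where 2: "b = m2 \<otimes> w2" "m2 \<in> H" "w2 \<in> Z" using b e unfolding PZ_def by blast
    have mc: "m1 \<in> carrier G" "m2 \<in> carrier G" using 1 2 Hc by auto
    let ?k = "m1 \<otimes> m2 \<otimes> inv m1 \<otimes> inv m2"
    have "a \<otimes> b \<otimes> inv a \<otimes> inv b = ?k"
      unfolding 1(1) 2(1) using cmt_central[OF mc 1(3) 2(3)] .
    moreover have "?k \<in> Z" unfolding center_iff
    proof (intro conjI ballI)
      show kc: "?k \<in> carrier G" using mc by simp
      fix c assume c: "c \<in> carrier G"
      obtain m3 w3 where 3: "c = m3 \<otimes> w3" "m3 \<in> H" "w3 \<in> Z" using c e unfolding PZ_def by blast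
      have m3: "m3 \<in> carrier G" using 3 Hc by auto
      have w3: "w3 \<in> carrier G" "?k \<otimes> w3 = w3 \<otimes> ?k" using 3(3) kc by (auto simp: center_iff)
      have km: "?k \<otimes> m3 = m3 \<otimes> ?k" using sub_p3_central[OF H(1) H(3) 1(2) 2(2) 3(2)] .
      have "?k \<otimes> (m3 \<otimes> w3) = (?k \<otimes> m3) \<otimes> w3" using kc m3 w3 by (simp add: m_assoc)
      also have "\<dots> = m3 \<otimes> (?k \<otimes> w3)" using kc m3 w3 by (simp only: km) (simp add: m_assoc)
      also have "\<dots> = (m3 \<otimes> w3) \<otimes> ?k" using kc m3 w3 by (simp only: w3(2)) (simp add: m_assoc)
      finally show "?k \<otimes> c = c \<otimes> ?k" using 3(1) by simp
    qed
    ultimately show "a \<otimes> b \<otimes> inv a \<otimes> inv b \<in> Z" by simp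
  qed
  hence "lower_central G 2 = {\<one>}" by (rule all_cmt_Z_lc2)
  thus False using assms unfolding nilpotency_class_def by auto
qed

lemma frat_CC: assumes "frattini G = Z" shows "CC_property G"
proof (rule ccontr)
  assume "\<not> CC_property G"
  then obtain H z where H: "subgroup H G" "\<not> set_commutes G H" "card H = p ^ 3" "z \<in> Z" "z \<notin> H"
    by (rule CCfail)
  have "maximal_subgroup G H" using max_sub H by blast
  moreover have "z \<in> frattini G" using assms H by simp
  ultimately show False using H(5) by (auto simp: frattini_def)
qed

theorem p4_main: "CC_property G \<longleftrightarrow> comm_group G \<or> nilpotency_class G 3 \<or> frattini G = Z"
proof (cases "set_commutes G (carrier G)")
  case True
  hence "comm_group G" by (intro group_comm_groupI) (auto simp: set_commutes_def)
  moreover have "CC_property G" unfolding CC_property_def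
  proof (intro allI impI)
    fix H assume "subgroup H G \<and> \<not> set_commutes G H"
    moreover have "set_commutes G H" if "subgroup H G" using True subgroup.subset[OF that]
      unfolding set_commutes_def by blast
    ultimately show "centralizer G H \<subseteq> H" by blast
  qed
  ultimately show ?thesis by simp
next
  case False
  have ncg: "\<not> comm_group G"
  proof
    assume cg: "comm_group G"
    interpret C: comm_group G by (rule cg)
    have "set_commutes G (carrier G)" unfolding set_commutes_def using C.m_comm by blast
    thus False using False by simp
  qed
  show ?thesis
  proof
    assume CC: "CC_property G"
    from Zcases[OF False] show "comm_group G \<or> nilpotency_class G 3 \<or> frattini G = Z"
    proof
      assume "card Z = p" hence "nilpotency_class G 3" by (rule class3_of_Zp[OF False])
      thus ?thesis by simp
    next
      assume "card Z = p ^ 2" hence "frattini G = Z" by (rule C2_case[OF CC False])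
      thus ?thesis by simp
    qed
  next
    assume "comm_group G \<or> nilpotency_class G 3 \<or> frattini G = Z"
    thus "CC_property G"
    proof (elim disjE)
      assume "comm_group G" thus ?thesis using ncg by simp
    next
      assume "nilpotency_class G 3" thus ?thesis by (rule class3_CC)
    next
      assume "frattini G = Z" thus ?thesis by (rule frat_CC)
    qed
  qed
qed

end

lemma part1:
  fixes p :: nat
  assumes "Factorial_Ring.prime p" "group G" "order G = p ^ k" "k \<le> 3"
  shows "CC_property G"
proof -
  interpret pgrp G p k using assms by (simp add: pgrp_def pgrp_axioms_def)
  show ?thesis unfolding CC_property_def
  proof (intro allI impI)
    fix H assume H: "subgroup H G \<and> \<not> set_commutes G H"
    have "p ^ 3 \<le> card H" using sub_small H by blast
    moreover have "card H \<le> card (carrier G)" using card_mono[OF fin subgroup.subset] H by blast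
    moreover have "p ^ k \<le> p ^ 3" using assms(4) p_gt1 by (simp add: power_increasing)
    ultimately have "card H = card (carrier G)" using card_carrier by linarith
    hence "H = carrier G" using card_subset_eq[OF fin subgroup.subset] H by blast
    thus "centralizer G H \<subseteq> H" by (auto simp: centralizer_def)
  qed
qed

theorem lemma6p9:
  fixes p :: nat
  assumes "Factorial_Ring.prime p"
  shows "(\<forall>G :: ('a, 'b) monoid_scheme. group G \<and> order G \<in> {p, p ^ 2, p ^ 3} \<longrightarrow> CC_property G)
    \<and> (\<forall>G :: ('c, 'd) monoid_scheme. group G \<and> order G = p ^ 4 \<longrightarrow>
         (CC_property G \<longleftrightarrow>
            comm_group G \<or> nilpotency_class G 3 \<or> frattini G = group_center G))"
proof (intro conjI allI impI)
  fix G :: "('a, 'b) monoid_scheme"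
  assume a: "group G \<and> order G \<in> {p, p ^ 2, p ^ 3}"
  hence "order G = p ^ 1 \<or> order G = p ^ 2 \<or> order G = p ^ 3" by auto
  thus "CC_property G"
  proof (elim disjE)
    assume "order G = p ^ 1" thus ?thesis using part1[OF assms, of G 1] a by simp
  next
    assume "order G = p ^ 2" thus ?thesis using part1[OF assms, of G 2] a by simp
  next
    assume "order G = p ^ 3" thus ?thesis using part1[OF assms, of G 3] a by simp
  qed
next
  fix G :: "('c, 'd) monoid_scheme"
  assume a: "group G \<and> order G = p ^ 4"
  interpret p4grp G p 4 using a assms by (simp add: p4grp_def pgrp_def pgrp_axioms_def p4grp_axioms_def)
  show "CC_property G \<longleftrightarrow> comm_group G \<or> nilpotency_class G 3 \<or> frattini G = group_center G"
    by (rule p4_main)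
qed

end
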